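(* Let $X$ be an infinite-dimensional Polish topological vector space and $T\in\mathfrak L(X)$. Assume there exists a $T$-invariant Borel probability measure $\mu$ on $X$ with full support such that $(X,\mathcal B,\mu,T)$ is a factor of an invertible measure-preserving dynamical system $(Y,\mathcal C,\nu,S)$ with Lebesgue spectrum. Then $T$ is hereditarily frequently hypercyclic. More precisely, for every countable family $(A_i)_{i\in I}$ of subsets of $\mathbb N$ with positive lower density and every family $(V_i)_{i\in I}$ of non-empty open subsets of $X$, $\mu$-almost every $x\in X$ is such that $\mathcal N_T(x,V_i)\cap A_i$ has positive lower density for every $i\in I$.
   Context: All probability spaces are standard Borel; $\mathcal B$ is the Borel $\sigma$-algebra of $X$. A measure-preserving dynamical system $(X,\mathcal B,\mu,T)$ is a factor of $(Y,\mathcal C,\nu,S)$ if, after removing null sets, there is a measurable $\pi:Y\to X$ with $\pi\circ S=T\circ\pi$ and $\nu\circ\pi^{-1}=\mu$. $(Y,\mathcal C,\nu,S)$ is invertible if $S$ is a bimeasurable bijection. It has Lebesgue spectrum if the Koopman operator $U_Sf=f\circ S$ restricted to $L^2_0(\nu)=\{f\in L^2(\nu):\int f\,d\nu=0\}$ admits a family $(f_i)$ such that $\{U_S^nf_i:n\in\mathbb Z,i\}$ is an orthonormal basis. $\mathcal N_T(x,V):=\{n\in\mathbb N:T^nx\in V\}$. Hereditarily frequently hypercyclic: for every countable family of non-empty open $V_i$ and sets $A_i\subset\mathbb N$ of positive lower density, some $x$ has $\mathcal N_T(x,V_i)\cap A_i$ of positive lower density for all $i$. *)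

theory Defs
  imports "HOL-Probability.Probability"
begin

definition polish_tvs :: "('a::{polish_space, real_vector}) itself \<Rightarrow> bool" where
  "polish_tvs _ \<longleftrightarrow>
     continuous_on UNIV (\<lambda>p::'a \<times> 'a. fst p + snd p) \<and>
     continuous_on UNIV (\<lambda>p::real \<times> 'a. fst p *\<^sub>R snd p)"

definition infinite_dimensional :: "('a::real_vector) itself \<Rightarrow> bool" where
  "infinite_dimensional _ \<longleftrightarrow> \<not> (\<exists>B::'a set. finite B \<and> span B = UNIV)"

definition lower_density :: "nat set \<Rightarrow> ereal" where
  "lower_density A = liminf (\<lambda>N. ereal (real (card (A \<inter> {1..N})) / real N))"

definition return_set :: "('a \<Rightarrow> 'a) \<Rightarrow> 'a \<Rightarrow> 'a set \<Rightarrow> nat set" where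
  "return_set T x V = {n. (T ^^ n) x \<in> V}"

definition hereditarily_frequently_hypercyclic :: "('a::topological_space \<Rightarrow> 'a) \<Rightarrow> bool" where
  "hereditarily_frequently_hypercyclic T \<longleftrightarrow>
     (\<forall>(I::nat set) (A::nat \<Rightarrow> nat set) (V::nat \<Rightarrow> 'a set).
        (\<forall>i\<in>I. open (V i) \<and> V i \<noteq> {} \<and> lower_density (A i) > 0) \<longrightarrow>
        (\<exists>x. \<forall>i\<in>I. lower_density (return_set T x (V i) \<inter> A i) > 0))"

definition mp_system :: "'a measure \<Rightarrow> ('a \<Rightarrow> 'a) \<Rightarrow> bool" where
  "mp_system M T \<longleftrightarrow> prob_space M \<and> T \<in> measurable M M \<and> distr M M T = M"

definition invertible_system :: "'a measure \<Rightarrow> ('a \<Rightarrow> 'a) \<Rightarrow> bool" where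
  "invertible_system M T \<longleftrightarrow> mp_system M T \<and> bij_betw T (space M) (space M) \<and>
     inv_into (space M) T \<in> measurable M M"

definition is_factor :: "'a measure \<Rightarrow> ('a \<Rightarrow> 'a) \<Rightarrow> 'b measure \<Rightarrow> ('b \<Rightarrow> 'b) \<Rightarrow> bool" where
  "is_factor M T N S \<longleftrightarrow>
     (\<exists>\<pi>. \<pi> \<in> measurable N M \<and> (AE y in N. \<pi> (S y) = T (\<pi> y)) \<and> distr N M \<pi> = M)"

definition ipow :: "'a measure \<Rightarrow> ('a \<Rightarrow> 'a) \<Rightarrow> int \<Rightarrow> 'a \<Rightarrow> 'a" where
  "ipow M S n = (if 0 \<le> n then S ^^ nat n else inv_into (space M) S ^^ nat (- n))"

definition L2 :: "'a measure \<Rightarrow> ('a \<Rightarrow> complex) \<Rightarrow> bool" where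
  "L2 M f \<longleftrightarrow> f \<in> borel_measurable M \<and> integrable M (\<lambda>y. (cmod (f y))\<^sup>2)"

definition L2_0 :: "'a measure \<Rightarrow> ('a \<Rightarrow> complex) \<Rightarrow> bool" where
  "L2_0 M f \<longleftrightarrow> L2 M f \<and> (\<integral>y. f y \<partial>M) = 0"

definition l2_inner :: "'a measure \<Rightarrow> ('a \<Rightarrow> complex) \<Rightarrow> ('a \<Rightarrow> complex) \<Rightarrow> complex" where
  "l2_inner M f g = (\<integral>y. f y * cnj (g y) \<partial>M)"

definition l2_dist :: "'a measure \<Rightarrow> ('a \<Rightarrow> complex) \<Rightarrow> ('a \<Rightarrow> complex) \<Rightarrow> real" where
  "l2_dist M f g = sqrt (\<integral>y. (cmod (f y - g y))\<^sup>2 \<partial>M)"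

text \<open>Lebesgue spectrum: there is a family F in L2_0 such that the functions f o S^n
  (f in F, n in Z) form an orthonormal basis of L2_0 (orthonormal system whose linear
  span is dense in L2_0).  The family is represented as a set: the members of an
  orthonormal family are automatically pairwise distinct.\<close>
definition lebesgue_spectrum :: "'a measure \<Rightarrow> ('a \<Rightarrow> 'a) \<Rightarrow> bool" where
  "lebesgue_spectrum M S \<longleftrightarrow>
     (\<exists>F::('a \<Rightarrow> complex) set.
        (\<forall>f\<in>F. L2_0 M f) \<and>
        (\<forall>f\<in>F. \<forall>g\<in>F. \<forall>n m::int.
            l2_inner M (f \<circ> ipow M S n) (g \<circ> ipow M S m) = (if f = g \<and> n = m then 1 else 0)) \<and>
        (\<forall>g. L2_0 M g \<longrightarrow> (\<forall>e>0. \<exists>P c. finite P \<and> P \<subseteq> F \<times> UNIV \<and>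
            l2_dist M g (\<lambda>y. \<Sum>(f, n)\<in>P. c (f, n) * f (ipow M S n y)) < e)))"

end

theory Submission
  imports Defs
begin

lemma measurable_funpow:
  assumes "f \<in> measurable M M"
  shows "(f ^^ n) \<in> measurable M M"
  by (induction n) (auto intro: measurable_compose[OF _ assms])

lemma distr_funpow:
  assumes f: "f \<in> measurable M M" and d: "distr M M f = M"
  shows "distr M M (f ^^ n) = M"
proof (induction n)
  case 0
  then show ?case by (simp add: distr_id2 id_def) 
next
  case (Suc n)
  have "distr M M (f ^^ Suc n) = distr M M ((f ^^ n) \<circ> f)"
    by (simp only: funpow_Suc_right)
  also have "\<dots> = distr (distr M M f) M (f ^^ n)"
    by (rule distr_distr[symmetric]) (auto intro: f measurable_funpow)
  also have "\<dots> = M" using d Suc by simp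
  finally show ?case .
qed

primrec pmax :: "(nat \<Rightarrow> 'b \<Rightarrow> real) \<Rightarrow> nat \<Rightarrow> 'b \<Rightarrow> real" where
  "pmax F 0 y = F 0 y"
| "pmax F (Suc N) y = max (pmax F N y) (F (Suc N) y)"

lemma pmax_ge: "k \<le> N \<Longrightarrow> F k y \<le> pmax F N y"
  by (induction N) (auto simp: le_Suc_eq max_def)

lemma pmax_attained: "\<exists>k\<le>N. pmax F N y = F k y"
  by (induction N) (auto simp: max_def intro: le_SucI)

lemma pmax_mono: "pmax F N y \<le> pmax F (Suc N) y"
  by simp

lemma pmax_integrable:
  fixes F :: "nat \<Rightarrow> 'b \<Rightarrow> real"
  assumes "\<And>k. integrable M (F k)"
  shows "integrable M (pmax F N)"
proof (induction N)
  case 0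
  then show ?case using assms by (simp add: fun_eq_iff[symmetric] eta_contract_eq)
next
  case (Suc N)
  have "integrable M (\<lambda>y. max (pmax F N y) (F (Suc N) y))"
    by (rule integrable_max) (use Suc assms in auto)
  then show ?case by simp
qed

lemma maximal_ineq:
  fixes f :: "'b \<Rightarrow> real"
  assumes P: "prob_space M" and Sm: "S \<in> measurable M M" and d: "distr M M S = M"
    and fi: "integrable M f" and f0: "\<And>y. 0 \<le> f y" and l: "0 < l"
  shows "measure M {y\<in>space M. \<exists>N\<ge>1. l * real N < (\<Sum>n<N. f ((S^^n) y))} \<le> (\<integral>y. f y \<partial>M) / l"
proof -
  interpret prob_space M by (rule P)
  define g where "g y = f y - l" for y
  define Sk where "Sk k y = (\<Sum>n<k. g ((S^^n) y))" for k y
  have gi: "integrable M g" unfolding g_def using fi by auto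
  have gm: "g \<in> borel_measurable M" using gi by auto
  have Sni: "integrable M (\<lambda>y. g ((S^^n) y))" for n
  proof -
    have "integrable (distr M M (S^^n)) g" using distr_funpow[OF Sm d] gi by simp
    then show ?thesis using integrable_distr_eq[OF measurable_funpow[OF Sm] gm] by simp
  qed
  have Ski: "integrable M (Sk k)" for k
    unfolding Sk_def using Sni by auto
  have Sk0: "Sk 0 y = 0" for y by (simp add: Sk_def)
  have SkS: "Sk (Suc k) y = g y + Sk k (S y)" for k y
  proof -
    have "Sk (Suc k) y = g ((S^^0) y) + (\<Sum>n<k. g ((S^^(Suc n)) y))"
      unfolding Sk_def by (rule sum.lessThan_Suc_shift)
    also have "\<dots> = g y + Sk k (S y)"
      unfolding Sk_def by (simp add: funpow_Suc_right del: funpow.simps)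
    finally show ?thesis .
  qed
  define E where "E N = {y\<in>space M. 0 < pmax Sk N y}" for N
  have pi: "integrable M (pmax Sk N)" for N by (rule pmax_integrable[OF Ski])
  have Em: "E N \<in> sets M" for N
    unfolding E_def using pi[of N] by measurable
  have pw: "pmax Sk N y - pmax Sk N (S y) \<le> indicator (E N) y * g y" if y: "y \<in> space M" for N y
  proof (cases "y \<in> E N")
    case True
    then have pos: "0 < pmax Sk N y" by (simp add: E_def)
    have ind: "indicator (E N) y = (1::real)" using True by (rule indicator_simps)
    obtain k where k: "k \<le> N" "pmax Sk N y = Sk k y" using pmax_attained[of N Sk y] by blast
    have "k \<noteq> 0"
    proof
      assume "k = 0"
      with k(2) pos Sk0[of y] show False by simp
    qed
    then obtain j where j: "k = Suc j" using not0_implies_Suc by blast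
    have le: "Sk j (S y) \<le> pmax Sk N (S y)" using k j by (intro pmax_ge) simp
    have "pmax Sk N y = g y + Sk j (S y)" using k(2) j SkS by simp
    then show ?thesis using le ind by simp
  next
    case False
    then have "\<not> 0 < pmax Sk N y" using y by (simp add: E_def)
    moreover have "0 \<le> pmax Sk N (S y)" using pmax_ge[of 0 N Sk "S y"] Sk0[of "S y"] by linarith
    moreover have ind: "indicator (E N) y = (0::real)" using False by (rule indicator_simps)
    ultimately show ?thesis by simp
  qed
  have ig: "integrable M (\<lambda>y. indicator (E N) y * g y)" for N
    using integrable_real_mult_indicator[OF Em gi] by (simp add: mult.commute)
  have ipS: "integrable M (\<lambda>y. pmax Sk N (S y))" for N
  proof -
    have "integrable (distr M M S) (pmax Sk N)" using d pi by simp
    then show ?thesis using integrable_distr_eq[OF Sm, of "pmax Sk N"] pi by auto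
  qed
  have intS: "(\<integral>y. pmax Sk N (S y) \<partial>M) = (\<integral>y. pmax Sk N y \<partial>M)" for N
  proof -
    have "(\<integral>y. pmax Sk N y \<partial>distr M M S) = (\<integral>y. pmax Sk N (S y) \<partial>M)"
      by (rule integral_distr[OF Sm]) (use pi in auto)
    then show ?thesis using d by simp
  qed
  have key: "0 \<le> (\<integral>y. indicator (E N) y * g y \<partial>M)" for N
  proof -
    have "(\<integral>y. pmax Sk N y - pmax Sk N (S y) \<partial>M) \<le> (\<integral>y. indicator (E N) y * g y \<partial>M)"
      by (rule integral_mono) (use pi ipS ig pw in auto)
    moreover have "(\<integral>y. pmax Sk N y - pmax Sk N (S y) \<partial>M) = 0"
      using intS[of N] pi ipS by (simp add: Bochner_Integration.integral_diff)
    ultimately show ?thesis by simp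
  qed
  have bnd: "measure M (E N) \<le> (\<integral>y. f y \<partial>M) / l" for N
  proof -
    have eq: "(\<integral>y. indicator (E N) y * g y \<partial>M) = (\<integral>y. indicator (E N) y * f y \<partial>M) - l * measure M (E N)"
    proof -
      have "(\<integral>y. indicator (E N) y * g y \<partial>M) = (\<integral>y. indicator (E N) y * f y - l * indicator (E N) y \<partial>M)"
        unfolding g_def by (simp add: algebra_simps)
      also have "\<dots> = (\<integral>y. indicator (E N) y * f y \<partial>M) - (\<integral>y. l * indicator (E N) y \<partial>M)"
      proof -
        have i1: "integrable M (\<lambda>y. indicator (E N) y * f y)"
          using integrable_real_mult_indicator[OF Em fi] by (simp add: mult.commute)
        have i2: "integrable M (\<lambda>y. l * indicator (E N) y)"
          using integrable_real_mult_indicator[OF Em integrable_const[of l]] by (simp add: mult.commute)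
        show ?thesis using Bochner_Integration.integral_diff[OF i1 i2] by simp
      qed
      also have "(\<integral>y. l * indicator (E N) y \<partial>M) = l * measure M (E N)"
        using Em by simp
      finally show ?thesis .
    qed
    have "(\<integral>y. indicator (E N) y * f y \<partial>M) \<le> (\<integral>y. f y \<partial>M)"
      by (rule integral_mono) (use integrable_real_mult_indicator[OF Em fi] fi f0 in \<open>auto simp: indicator_def mult.commute\<close>)
    then have "l * measure M (E N) \<le> (\<integral>y. f y \<partial>M)" using key[of N] eq by simp
    then show ?thesis using l by (simp add: field_simps)
  qed
  have inc: "incseq E"
    unfolding incseq_Suc_iff E_def using pmax_mono
    by (auto intro: less_le_trans)
  have lim: "(\<lambda>N. measure M (E N)) \<longlonglongrightarrow> measure M (\<Union>N. E N)"
    by (rule finite_Lim_measure_incseq) (use Em inc in auto)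
  have U: "measure M (\<Union>N. E N) \<le> (\<integral>y. f y \<partial>M) / l"
    by (rule LIMSEQ_le_const2[OF lim]) (use bnd in auto)
  have seteq: "{y\<in>space M. \<exists>N\<ge>1. l * real N < (\<Sum>n<N. f ((S^^n) y))} = (\<Union>N. E N)"
  proof -
    have Skf: "Sk k y = (\<Sum>n<k. f ((S^^n) y)) - l * real k" for k y
      unfolding Sk_def g_def by (simp add: sum_subtractf)
    have "(\<exists>N\<ge>1. l * real N < (\<Sum>n<N. f ((S^^n) y))) \<longleftrightarrow> (\<exists>N. 0 < pmax Sk N y)" for y
    proof
      assume "\<exists>N\<ge>1. l * real N < (\<Sum>n<N. f ((S^^n) y))"
      then obtain N where "0 < Sk N y" using Skf by force
      then have "0 < pmax Sk N y" using pmax_ge[of N N Sk y] by linarith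
      then show "\<exists>N. 0 < pmax Sk N y" by blast
    next
      assume "\<exists>N. 0 < pmax Sk N y"
      then obtain N where "0 < pmax Sk N y" by blast
      moreover obtain k where "k \<le> N" "pmax Sk N y = Sk k y" using pmax_attained[of N Sk y] by blast
      ultimately have pos: "0 < Sk k y" by simp
      have "k \<noteq> 0"
      proof
        assume "k = 0"
        with pos Sk0[of y] show False by simp
      qed
      with pos show "\<exists>N\<ge>1. l * real N < (\<Sum>n<N. f ((S^^n) y))" using Skf
        by (intro exI[of _ k]) auto
    qed
    then show ?thesis unfolding E_def by auto
  qed
  show ?thesis using U seteq by simp
qed


lemma dens_pow2:
  fixes E :: "nat set" and c :: real
  assumes c: "0 < c" and ev: "\<forall>k\<ge>K. c * 2^k \<le> real (card (E \<inter> {1..2^k}))"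
  shows "0 < lower_density E"
proof -
  have "ereal (c/2) \<le> lower_density E"
    unfolding lower_density_def
  proof (rule Liminf_bounded, unfold eventually_sequentially, intro exI allI impI)
    fix N :: nat assume N: "2^K \<le> N"
    have N1: "1 \<le> N" using N by (metis le_trans one_le_numeral one_le_power)
    obtain k where k: "2^k \<le> N" "N < 2^(k+1)" using ex_power_ivl1[of 2 N] N1 by auto
    have "K \<le> k"
    proof (rule ccontr)
      assume "\<not> K \<le> k"
      then have "(2::nat)^(k+1) \<le> 2^K" by (intro power_increasing) auto
      with k N show False by linarith
    qed
    then have "c * 2^k \<le> real (card (E \<inter> {1..2^k}))" using ev by blast
    also have "\<dots> \<le> real (card (E \<inter> {1..N}))"
      using k by (intro of_nat_mono card_mono) auto
    finally have a: "c * 2^k \<le> real (card (E \<inter> {1..N}))" .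
    have "real N < 2 * 2^k" using k by (metis of_nat_less_iff of_nat_numeral of_nat_power power_Suc Suc_eq_plus1)
    then have "c/2 * real N \<le> c * 2^k" using c by (simp add: field_simps)
    with a have "c/2 * real N \<le> real (card (E \<inter> {1..N}))" by linarith
    then have "c/2 \<le> real (card (E \<inter> {1..N})) / real N" using N1 by (simp add: field_simps)
    then show "ereal (c/2) \<le> ereal (real (card (E \<inter> {1..N})) / real N)" by simp
  qed
  moreover have "(0::ereal) < ereal (c/2)" using c by simp
  ultimately show ?thesis by (meson less_le_trans)
qed

lemma dens_pos_lower:
  assumes "0 < lower_density A"
  shows "\<exists>\<delta>>0. \<exists>N0. \<forall>N\<ge>N0. \<delta> * real N \<le> real (card (A \<inter> {1..N}))"
proof -
  obtain \<delta> where d: "0 < ereal \<delta>" "ereal \<delta> < lower_density A" using ereal_dense2[OF assms] by blast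
  have "\<forall>y<lower_density A. eventually (\<lambda>N. y < ereal (real (card (A \<inter> {1..N})) / real N)) sequentially"
    unfolding lower_density_def by (rule le_Liminf_iff[THEN iffD1]) simp
  then have "eventually (\<lambda>N. ereal \<delta> < ereal (real (card (A \<inter> {1..N})) / real N)) sequentially"
    using d by blast
  then obtain N0 where N0: "\<And>N. N \<ge> N0 \<Longrightarrow> \<delta> < real (card (A \<inter> {1..N})) / real N"
    unfolding eventually_sequentially by auto
  have "\<delta> * real N \<le> real (card (A \<inter> {1..N}))" if "N \<ge> N0" for N
  proof (cases "N = 0")
    case True then show ?thesis by simp
  next
    case False
    then show ?thesis using N0[OF that] by (simp add: field_simps)
  qed
  then show ?thesis using d by auto
qed


lemma amgm_aux:
  fixes x t :: real
  assumes t: "0 < t"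
  shows "x \<le> t/2 + x^2/(2*t)"
proof -
  have "0 \<le> (x - t)^2" by simp
  then have "2*t*x \<le> x^2 + t^2" by (simp add: power2_eq_square algebra_simps)
  then show ?thesis using t by (simp add: field_simps power2_eq_square)
qed

lemma AE_small:
  assumes P: "prob_space M"
    and H: "\<And>\<eta>::real. 0 < \<eta> \<Longrightarrow> \<exists>Z\<in>sets M. measure M Z \<le> \<eta> \<and> {y\<in>space M. \<not> Q y} \<subseteq> Z"
  shows "AE y in M. Q y"
proof -
  interpret prob_space M by (rule P)
  have "\<forall>j::nat. \<exists>Z\<in>sets M. measure M Z \<le> 1 / real (Suc j) \<and> {y\<in>space M. \<not> Q y} \<subseteq> Z"
    using H by simp
  then obtain Z where Z: "\<And>j. Z j \<in> sets M" "\<And>j. measure M (Z j) \<le> 1 / real (Suc j)"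
    "\<And>j. {y\<in>space M. \<not> Q y} \<subseteq> Z j"
    by metis
  define ZZ where "ZZ = (\<Inter>j. Z j)"
  have ZZs: "ZZ \<in> sets M" unfolding ZZ_def using Z(1) by auto
  have le: "measure M ZZ \<le> 1 / real (Suc j)" for j
  proof -
    have "measure M ZZ \<le> measure M (Z j)"
      unfolding ZZ_def by (rule finite_measure_mono) (use Z(1) in auto)
    then show ?thesis using Z(2)[of j] by linarith
  qed
  have "measure M ZZ = 0"
  proof (rule ccontr)
    assume "measure M ZZ \<noteq> 0"
    then have "0 < measure M ZZ" using measure_nonneg[of M ZZ] by linarith
    then obtain j where "inverse (real (Suc j)) < measure M ZZ"
      using reals_Archimedean by blast
    with le[of j] show False by (simp add: inverse_eq_divide)
  qed
  then have "emeasure M ZZ = 0" using ZZs by (simp add: emeasure_eq_measure)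
  moreover have "{y\<in>space M. \<not> Q y} \<subseteq> ZZ" unfolding ZZ_def using Z(3) by auto
  ultimately show ?thesis using ZZs by (intro AE_I) auto
qed

lemma main_Y:
  fixes M :: "'b measure" and S :: "'b \<Rightarrow> 'b" and W :: "'b set" and A :: "nat set"
    and h :: "'b \<Rightarrow> complex"
  assumes P: "prob_space M" and Sm: "S \<in> measurable M M" and d: "distr M M S = M"
    and W: "W \<in> sets M" and c: "0 < measure M W"
    and A: "0 < lower_density A"
    and h: "\<And>y. h y = complex_of_real (indicator W y - measure M W)"
    and approx: "\<And>e. 0 < e \<Longrightarrow> \<exists>u K. u \<in> borel_measurable M \<and>
        integrable M (\<lambda>y. (cmod (h y - u y))^2) \<and> (\<integral>y. (cmod (h y - u y))^2 \<partial>M) < e \<and>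
        (\<forall>B. finite B \<longrightarrow> integrable M (\<lambda>y. (cmod (\<Sum>m\<in>B. u ((S^^m) y)))^2) \<and>
             (\<integral>y. (cmod (\<Sum>m\<in>B. u ((S^^m) y)))^2 \<partial>M) \<le> K * real (card B))"
  shows "AE y in M. 0 < lower_density ({n. (S^^n) y \<in> W} \<inter> A)"
proof -
  interpret prob_space M by (rule P)
  define c where "c = measure M W"
  have c0: "0 < c" using c by (simp add: c_def)
  obtain \<delta> N0 where dl: "0 < \<delta>" and N0: "\<And>N. N \<ge> N0 \<Longrightarrow> \<delta> * real N \<le> real (card (A \<inter> {1..N}))"
    using dens_pos_lower[OF A] by blast
  define t where "t = c * \<delta> / 12"
  have t0: "0 < t" using c0 dl by (simp add: t_def)
  have Snm[measurable]: "(S^^n) \<in> measurable M M" for n by (rule measurable_funpow[OF Sm])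
  have hm[measurable]: "h \<in> borel_measurable M"
  proof -
    have "(\<lambda>y. complex_of_real (indicator W y - measure M W)) \<in> borel_measurable M"
      using W by measurable
    moreover have "h = (\<lambda>y. complex_of_real (indicator W y - measure M W))" using h by (intro ext) simp
    ultimately show ?thesis by simp
  qed
  have key: "\<exists>Z\<in>sets M. measure M Z \<le> \<eta> \<and> {y\<in>space M. \<not> 0 < lower_density ({n. (S^^n) y \<in> W} \<inter> A)} \<subseteq> Z"
    if eta: "0 < \<eta>" for \<eta> :: real
  proof -
  obtain u K where um[measurable]: "u \<in> borel_measurable M"
    and ri: "integrable M (\<lambda>y. (cmod (h y - u y))^2)"
    and rsmall: "(\<integral>y. (cmod (h y - u y))^2 \<partial>M) < \<eta> * t^2"
    and var: "\<And>B. finite B \<Longrightarrow> integrable M (\<lambda>y. (cmod (\<Sum>m\<in>B. u ((S^^m) y)))^2) \<and>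
             (\<integral>y. (cmod (\<Sum>m\<in>B. u ((S^^m) y)))^2 \<partial>M) \<le> K * real (card B)"
    using approx[of "\<eta> * t^2"] eta t0 by auto
  define r where "r y = h y - u y" for y
  have rm[measurable]: "r \<in> borel_measurable M" unfolding r_def by measurable
  define E1 where "E1 = {y\<in>space M. \<exists>N\<ge>1. t^2 * real N < (\<Sum>n<N. (\<lambda>y. (cmod (r y))^2) ((S^^n) y))}"
  have E1m: "E1 \<in> sets M" unfolding E1_def by measurable
  have E1le: "measure M E1 \<le> (\<integral>y. (cmod (r y))^2 \<partial>M) / t^2"
    unfolding E1_def by (rule maximal_ineq[OF P Sm d]) (use ri t0 in \<open>auto simp: r_def\<close>)
  also have "\<dots> \<le> \<eta>" using rsmall t0 by (simp add: r_def field_simps)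
  finally have E1eta: "measure M E1 \<le> \<eta>" .
  define Bk where "Bk k = A \<inter> {1..(2::nat)^k}" for k
  have Bkf: "finite (Bk k)" for k unfolding Bk_def by auto
  have Bkc: "card (Bk k) \<le> 2^k" for k
  proof -
    have "card (Bk k) \<le> card {1..(2::nat)^k}" unfolding Bk_def by (intro card_mono) auto
    then show ?thesis by simp
  qed
  define D where "D k = {y\<in>space M. t * 2^k < cmod (\<Sum>m\<in>Bk k. u ((S^^m) y))}" for k
  have Dm[measurable]: "D k \<in> sets M" for k unfolding D_def by measurable
  define K' where "K' = max K 0"
  have Dle: "measure M (D k) \<le> (K' / t^2) * (1/2)^k" for k
  proof -
    let ?X = "\<lambda>y. (cmod (\<Sum>m\<in>Bk k. u ((S^^m) y)))^2"
    have Xi: "integrable M ?X" using var[OF Bkf] by blast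
    have Xm: "?X \<in> borel_measurable M" by measurable
    have Cs: "{y\<in>space M. (t * 2^k)^2 \<le> ?X y} \<in> sets M" by measurable
    have sub: "D k \<subseteq> {y\<in>space M. (t * 2^k)^2 \<le> ?X y}"
    proof
      fix y assume "y \<in> D k"
      then have y: "y \<in> space M" "t * 2^k < cmod (\<Sum>m\<in>Bk k. u ((S^^m) y))" unfolding D_def by auto
      have "0 \<le> t * 2^k" using t0 by simp
      then have "(t * 2^k)^2 \<le> ?X y" using power_mono[OF less_imp_le[OF y(2)], of 2] by simp
      then show "y \<in> {y\<in>space M. (t * 2^k)^2 \<le> ?X y}" using y by simp
    qed
    have "measure M (D k) \<le> measure M {y\<in>space M. (t * 2^k)^2 \<le> ?X y}"
      by (rule finite_measure_mono[OF sub Cs])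
    also have "\<dots> \<le> (\<integral>y. ?X y \<partial>M) / (t * 2^k)^2"
      by (rule integral_Markov_inequality_measure[OF Xi]) (use t0 in auto)
    also have "(\<integral>y. ?X y \<partial>M) \<le> K' * 2^k"
    proof -
      have "(\<integral>y. ?X y \<partial>M) \<le> K * real (card (Bk k))" using var[OF Bkf] by blast
      also have "\<dots> \<le> K' * real (card (Bk k))" unfolding K'_def by (intro mult_right_mono) auto
      also have "\<dots> \<le> K' * 2^k"
      proof -
        have "real (card (Bk k)) \<le> 2^k" using Bkc[of k]
          by (metis of_nat_le_iff of_nat_numeral of_nat_power)
        then show ?thesis unfolding K'_def by (intro mult_left_mono) auto
      qed
      finally show ?thesis .
    qed
    then have "(\<integral>y. ?X y \<partial>M) / (t * 2^k)^2 \<le> K' * 2^k / (t * 2^k)^2"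
      by (intro divide_right_mono) auto
    also have "K' * 2^k / (t * 2^k)^2 = (K' / t^2) * (1/2)^k"
    proof -
      have "(t * 2^k)^2 = t^2 * 2^k * (2::real)^k" by (simp add: power_mult_distrib power2_eq_square)
      moreover have "(1/2::real)^k = 1 / 2^k" by (simp add: power_one_over)
      ultimately show ?thesis using t0 by simp
    qed
    finally show ?thesis .
  qed
  have summ: "summable (\<lambda>k. measure M (D k))"
  proof (rule summable_comparison_test')
    show "summable (\<lambda>k. (K' / t^2) * (1/2::real)^k)"
      by (intro summable_mult summable_geometric) auto
    show "norm (measure M (D k)) \<le> (K' / t^2) * (1/2)^k" for k
      using Dle[of k] by simp
  qed
  have "AE y in M. eventually (\<lambda>k. y \<in> space M - D k) sequentially"
    by (rule borel_cantelli_AE1) (use summ in \<open>auto simp: emeasure_eq_measure\<close>)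
  then obtain Z0 where Z0: "{y\<in>space M. \<not> eventually (\<lambda>k. y \<in> space M - D k) sequentially} \<subseteq> Z0"
    "emeasure M Z0 = 0" "Z0 \<in> sets M"
    by (rule AE_E)
  define Z where "Z = E1 \<union> Z0"
  have Zs: "Z \<in> sets M" unfolding Z_def using E1m Z0 by auto
  have "measure M Z \<le> measure M E1 + measure M Z0"
    unfolding Z_def by (rule measure_Un_le) (use E1m Z0 in auto)
  moreover have "measure M Z0 = 0" using Z0 by (simp add: emeasure_eq_measure)
  ultimately have Zeta: "measure M Z \<le> \<eta>" using E1eta by linarith
  have good: "0 < lower_density ({n. (S^^n) y \<in> W} \<inter> A)"
    if y: "y \<in> space M" "y \<notin> E1" "y \<notin> Z0" for y
  proof -
    have "eventually (\<lambda>k. y \<in> space M - D k) sequentially" using Z0(1) y by blast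
    then obtain K1 where K1: "\<And>k. k \<ge> K1 \<Longrightarrow> y \<notin> D k"
      unfolding eventually_sequentially by blast
    show ?thesis
    proof (rule dens_pow2[where c="c * \<delta> / 2" and K="max K1 N0"])
      show "0 < c * \<delta> / 2" using c0 dl by simp
      show "\<forall>k\<ge>max K1 N0. c * \<delta> / 2 * 2 ^ k \<le> real (card ({n. (S ^^ n) y \<in> W} \<inter> A \<inter> {1..2 ^ k}))"
      proof (intro allI impI)
        fix k assume k: "max K1 N0 \<le> k"
        define N where "N = (2::nat)^k"
        have N1: "1 \<le> N" unfolding N_def by simp
        have NN0: "N0 \<le> N" unfolding N_def using k less_exp[of k] by linarith
        have u_small: "cmod (\<Sum>m\<in>Bk k. u ((S^^m) y)) \<le> t * real N"
          using K1[of k] k y unfolding D_def N_def by auto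
        have cardB: "\<delta> * real N \<le> real (card (Bk k))"
          using N0[OF NN0] unfolding Bk_def N_def .
        have notE1: "(\<Sum>n<N+1. (cmod (r ((S^^n) y)))^2) \<le> t^2 * real (N+1)"
          using y unfolding E1_def by (auto simp: not_less)
        have rsum: "(\<Sum>n<N+1. cmod (r ((S^^n) y))) \<le> t * real (N+1)"
        proof -
          have "(\<Sum>n<N+1. cmod (r ((S^^n) y))) \<le> (\<Sum>n<N+1. t/2 + (cmod (r ((S^^n) y)))^2/(2*t))"
            by (intro sum_mono amgm_aux t0)
          also have "\<dots> = real (N+1) * (t/2) + (\<Sum>n<N+1. (cmod (r ((S^^n) y)))^2) / (2*t)"
            by (simp add: sum.distrib sum_divide_distrib[symmetric] del: sum.lessThan_Suc)
          also have "\<dots> \<le> real (N+1) * (t/2) + (t^2 * real (N+1)) / (2*t)"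
            using notE1 t0 by (intro add_left_mono divide_right_mono) auto
          also have "\<dots> = t * real (N+1)" using t0 by (simp add: power2_eq_square field_simps)
          finally show ?thesis .
        qed
        have Bsub: "Bk k \<subseteq> {..<N+1}" unfolding Bk_def N_def by auto
        have rB: "(\<Sum>m\<in>Bk k. cmod (r ((S^^m) y))) \<le> (\<Sum>n<N+1. cmod (r ((S^^n) y)))"
          by (rule sum_mono2) (use Bsub in auto)
        have pt: "indicator W ((S^^m) y) = c + Re (u ((S^^m) y)) + Re (r ((S^^m) y))" for m
          using h[of "(S^^m) y"] unfolding r_def c_def by simp
        have cardeq: "real (card ({n. (S ^^ n) y \<in> W} \<inter> A \<inter> {1..2 ^ k})) = (\<Sum>m\<in>Bk k. indicator W ((S^^m) y))"
        proof -
          have "(\<Sum>m\<in>Bk k. indicator W ((S^^m) y)) = (\<Sum>m\<in>Bk k. (1::real) * indicator W ((S^^m) y))"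
            by simp
          also have "\<dots> = (\<Sum>m\<in>{m\<in>Bk k. (S^^m) y \<in> W}. (1::real))"
            by (rule Bochner_Integration.sum_mult_indicator[OF Bkf])
          also have "\<dots> = real (card {m\<in>Bk k. (S^^m) y \<in> W})" by simp
          also have "{m\<in>Bk k. (S^^m) y \<in> W} = {n. (S ^^ n) y \<in> W} \<inter> A \<inter> {1..2 ^ k}"
            unfolding Bk_def by auto
          finally show ?thesis by simp
        qed
        have "(\<Sum>m\<in>Bk k. indicator W ((S^^m) y)) = c * real (card (Bk k)) + Re (\<Sum>m\<in>Bk k. u ((S^^m) y)) + (\<Sum>m\<in>Bk k. Re (r ((S^^m) y)))"
          by (simp add: pt sum.distrib Re_sum)
        moreover have "- cmod (\<Sum>m\<in>Bk k. u ((S^^m) y)) \<le> Re (\<Sum>m\<in>Bk k. u ((S^^m) y))"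
          using abs_Re_le_cmod[of "\<Sum>m\<in>Bk k. u ((S^^m) y)"] by linarith
        moreover have "- (\<Sum>m\<in>Bk k. cmod (r ((S^^m) y))) \<le> (\<Sum>m\<in>Bk k. Re (r ((S^^m) y)))"
        proof -
          have "(\<Sum>m\<in>Bk k. - cmod (r ((S^^m) y))) \<le> (\<Sum>m\<in>Bk k. Re (r ((S^^m) y)))"
            by (intro sum_mono) (use abs_Re_le_cmod in \<open>smt (verit)\<close>)
          then show ?thesis by (simp add: sum_negf)
        qed
        moreover have "c * (\<delta> * real N) \<le> c * real (card (Bk k))"
          using cardB c0 by (intro mult_left_mono) auto
        ultimately have "c * \<delta> * real N - t * real N - t * real (N+1) \<le> (\<Sum>m\<in>Bk k. indicator W ((S^^m) y))"
          using u_small rsum rB by (simp add: algebra_simps)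
        moreover have "c * \<delta> / 2 * real N \<le> c * \<delta> * real N - t * real N - t * real (N+1)"
          using N1 c0 dl unfolding t_def by (simp add: field_simps)
        ultimately have fin: "c * \<delta> / 2 * real N \<le> (\<Sum>m\<in>Bk k. indicator W ((S^^m) y))" by linarith
        have RN: "real N = 2^k" unfolding N_def by simp
        show "c * \<delta> / 2 * 2 ^ k \<le> real (card ({n. (S ^^ n) y \<in> W} \<inter> A \<inter> {1..2 ^ k}))"
          using fin cardeq unfolding RN by simp
      qed
    qed
  qed
  show ?thesis
    using Zs Zeta good unfolding Z_def by blast
  qed
  show ?thesis by (rule AE_small[OF P key])
qed


lemma ipow_simp:
  assumes sp: "space M = UNIV"
  shows "ipow M S n = (if 0 \<le> n then S ^^ nat n else inv_into UNIV S ^^ nat (- n))"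
  unfolding ipow_def sp ..

lemma ipow_S:
  assumes sp: "space M = UNIV" and b: "bij S"
  shows "ipow M S n (S y) = ipow M S (n + 1) y"
proof (cases "0 \<le> n")
  case True
  then have "nat (n + 1) = Suc (nat n)" by simp
  then show ?thesis using True unfolding ipow_simp[OF sp]
    by (simp add: funpow_Suc_right del: funpow.simps)
next
  case False
  define j where "j = nat (- n - 1)"
  have nj: "nat (- n) = Suc j" using False unfolding j_def by simp
  have inj: "inj S" using b by (simp add: bij_def)
  have "(inv_into UNIV S ^^ nat (- n)) (S y) = (inv_into UNIV S ^^ j) y"
    unfolding nj by (simp add: funpow_Suc_right inv_into_f_f[OF inj] del: funpow.simps)
  moreover have "ipow M S (n + 1) y = (inv_into UNIV S ^^ j) y"
  proof (cases "n + 1 = 0")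
    case True
    then have "j = 0" unfolding j_def by simp
    then show ?thesis using True unfolding ipow_simp[OF sp] by simp
  next
    case False2: False
    then have "\<not> 0 \<le> n + 1" using False by simp
    moreover have "nat (- (n + 1)) = j" unfolding j_def by simp
    ultimately show ?thesis unfolding ipow_simp[OF sp] by simp
  qed
  ultimately show ?thesis using False unfolding ipow_simp[OF sp] by simp
qed

lemma ipow_funpow:
  assumes sp: "space M = UNIV" and b: "bij S"
  shows "ipow M S n ((S^^m) y) = ipow M S (n + int m) y"
proof (induction m arbitrary: n)
  case 0
  then show ?case by simp
next
  case (Suc m)
  have "ipow M S n ((S^^Suc m) y) = ipow M S n (S ((S^^m) y))" by simp
  also have "\<dots> = ipow M S (n + 1) ((S^^m) y)" by (rule ipow_S[OF sp b])
  also have "\<dots> = ipow M S (n + 1 + int m) y" by (rule Suc.IH)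
  also have "n + 1 + int m = n + int (Suc m)" by simp
  finally show ?case .
qed

lemma ipow_meas:
  assumes sp: "space M = UNIV" and Sm: "S \<in> measurable M M" and Im: "inv_into UNIV S \<in> measurable M M"
  shows "ipow M S n \<in> measurable M M"
  unfolding ipow_simp[OF sp] using measurable_funpow[OF Sm] measurable_funpow[OF Im] by simp

lemma sq_add_le:
  fixes a b :: real
  shows "(a + b)^2 \<le> 2 * a^2 + 2 * b^2"
proof -
  have "0 \<le> (a - b)^2" by simp
  then show ?thesis by (simp add: power2_eq_square algebra_simps)
qed

lemma prod_le_sq:
  fixes a b :: real
  assumes "0 \<le> a" "0 \<le> b"
  shows "a * b \<le> a^2 + b^2"
proof -
  have "0 \<le> (a - b)^2" by simp
  then have "2 * (a * b) \<le> a^2 + b^2" by (simp add: power2_eq_square algebra_simps)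
  moreover have "0 \<le> a * b" using assms by simp
  ultimately show ?thesis by linarith
qed

lemma L2_add:
  assumes "L2 M f" "L2 M g"
  shows "L2 M (\<lambda>y. f y + g y)"
proof -
  have fm: "f \<in> borel_measurable M" and gm: "g \<in> borel_measurable M"
    and fi: "integrable M (\<lambda>y. (cmod (f y))^2)" and gi: "integrable M (\<lambda>y. (cmod (g y))^2)"
    using assms by (auto simp: L2_def)
  have b: "norm ((cmod (f y + g y))^2) \<le> norm (2 * (cmod (f y))^2 + 2 * (cmod (g y))^2)" for y
  proof -
    have "cmod (f y + g y) \<le> cmod (f y) + cmod (g y)" by (rule norm_triangle_ineq)
    then have "(cmod (f y + g y))^2 \<le> (cmod (f y) + cmod (g y))^2" by (intro power_mono) auto
    also have "\<dots> \<le> 2 * (cmod (f y))^2 + 2 * (cmod (g y))^2"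
      by (rule sq_add_le)
    finally show ?thesis by simp
  qed
  have "integrable M (\<lambda>y. (cmod (f y + g y))^2)"
    by (rule Bochner_Integration.integrable_bound[where f="\<lambda>y. 2 * (cmod (f y))^2 + 2 * (cmod (g y))^2"])
       (use fi gi fm gm b in auto)
  then show ?thesis using fm gm by (simp add: L2_def)
qed

lemma L2_mult:
  assumes "L2 M f"
  shows "L2 M (\<lambda>y. a * f y)"
proof -
  have fm: "f \<in> borel_measurable M" and fi: "integrable M (\<lambda>y. (cmod (f y))^2)"
    using assms by (auto simp: L2_def)
  have "integrable M (\<lambda>y. (cmod a)^2 * (cmod (f y))^2)" using fi by simp
  then have "integrable M (\<lambda>y. (cmod (a * f y))^2)" by (simp add: norm_mult power_mult_distrib)
  then show ?thesis using fm by (simp add: L2_def)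
qed

lemma L2_sum:
  assumes "finite P" "\<And>p. p \<in> P \<Longrightarrow> L2 M (f p)"
  shows "L2 M (\<lambda>y. \<Sum>p\<in>P. f p y)"
  using assms
proof (induction P rule: finite_induct)
  case empty
  then show ?case by (simp add: L2_def)
next
  case (insert x F)
  have "L2 M (\<lambda>y. f x y + (\<Sum>p\<in>F. f p y))"
    by (rule L2_add) (use insert in \<open>auto simp: eta_contract_eq\<close>)
  then show ?case using insert by simp
qed

lemma L2_diff:
  assumes "L2 M f" "L2 M g"
  shows "L2 M (\<lambda>y. f y - g y)"
  using L2_add[OF assms(1) L2_mult[OF assms(2), of "-1"]] by simp

lemma L2_prod_integrable:
  assumes "L2 M f" "L2 M g"
  shows "integrable M (\<lambda>y. f y * cnj (g y))"
proof -
  have fm: "f \<in> borel_measurable M" and gm: "g \<in> borel_measurable M"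
    and fi: "integrable M (\<lambda>y. (cmod (f y))^2)" and gi: "integrable M (\<lambda>y. (cmod (g y))^2)"
    using assms by (auto simp: L2_def)
  have b: "norm (f y * cnj (g y)) \<le> norm ((cmod (f y))^2 + (cmod (g y))^2)" for y
  proof -
    have "cmod (f y) * cmod (g y) \<le> (cmod (f y))^2 + (cmod (g y))^2"
      by (rule prod_le_sq) auto
    then show ?thesis by (simp add: norm_mult)
  qed
  have cm: "(\<lambda>y. cnj (g y)) \<in> borel_measurable M"
    by (rule borel_measurable_continuous_on[OF linear_continuous_on[OF bounded_linear_cnj] gm])
  have pm: "(\<lambda>y. f y * cnj (g y)) \<in> borel_measurable M" using fm cm by measurable
  show ?thesis
    by (rule Bochner_Integration.integrable_bound[where f="\<lambda>y. (cmod (f y))^2 + (cmod (g y))^2"])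
       (use fi gi pm b in auto)
qed

lemma orthonormal_sum_norm:
  fixes \<phi> :: "'i \<Rightarrow> 'b \<Rightarrow> complex"
  assumes fin: "finite B" and L: "\<And>i. i \<in> B \<Longrightarrow> L2 M (\<phi> i)"
    and on: "\<And>i j. i \<in> B \<Longrightarrow> j \<in> B \<Longrightarrow> l2_inner M (\<phi> i) (\<phi> j) = (if i = j then 1 else 0)"
  shows "(\<integral>y. (cmod (\<Sum>i\<in>B. \<phi> i y))^2 \<partial>M) = real (card B)"
proof -
  have "complex_of_real (\<integral>y. (cmod (\<Sum>i\<in>B. \<phi> i y))^2 \<partial>M)
      = (\<integral>y. complex_of_real ((cmod (\<Sum>i\<in>B. \<phi> i y))^2) \<partial>M)"
    by (rule integral_complex_of_real[symmetric])
  also have "\<dots> = (\<integral>y. (\<Sum>i\<in>B. \<Sum>j\<in>B. \<phi> i y * cnj (\<phi> j y)) \<partial>M)"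
    by (simp only: complex_norm_square cnj_sum sum_product)
  also have "\<dots> = (\<Sum>i\<in>B. \<Sum>j\<in>B. (\<integral>y. \<phi> i y * cnj (\<phi> j y) \<partial>M))"
  proof -
    have I: "integrable M (\<lambda>y. \<phi> i y * cnj (\<phi> j y))" if "i \<in> B" "j \<in> B" for i j
      using L2_prod_integrable[OF L L] that by blast
    have "(\<integral>y. (\<Sum>i\<in>B. \<Sum>j\<in>B. \<phi> i y * cnj (\<phi> j y)) \<partial>M) = (\<Sum>i\<in>B. (\<integral>y. (\<Sum>j\<in>B. \<phi> i y * cnj (\<phi> j y)) \<partial>M))"
      by (rule Bochner_Integration.integral_sum) (use I in auto)
    also have "\<dots> = (\<Sum>i\<in>B. \<Sum>j\<in>B. (\<integral>y. \<phi> i y * cnj (\<phi> j y) \<partial>M))"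
      by (rule sum.cong[OF refl], rule Bochner_Integration.integral_sum) (use I in auto)
    finally show ?thesis .
  qed
  also have "\<dots> = (\<Sum>i\<in>B. \<Sum>j\<in>B. (if i = j then 1 else 0))"
    using on unfolding l2_inner_def by (intro sum.cong refl) auto
  also have "\<dots> = complex_of_real (real (card B))" using fin by simp
  finally show ?thesis by (simp only: of_real_eq_iff)
qed

lemma csum_sq:
  fixes w :: "'i \<Rightarrow> complex"
  shows "(cmod (\<Sum>j\<in>P. w j))^2 \<le> real (card P) * (\<Sum>j\<in>P. (cmod (w j))^2)"
proof -
  have "(cmod (\<Sum>j\<in>P. w j))^2 \<le> (\<Sum>j\<in>P. cmod (w j))^2"
    by (intro power_mono norm_sum) auto
  also have "\<dots> \<le> (\<Sum>j\<in>P. (cmod (w j))^2) * real (card P)"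
    by (rule sum_squared_le_sum_of_squares)
  finally show ?thesis by (simp add: mult.commute)
qed


lemma L2_from_inner:
  assumes m: "f \<in> borel_measurable M" and i: "l2_inner M f f = 1"
  shows "L2 M f"
proof -
  have "integrable M (\<lambda>y. f y * cnj (f y))"
  proof (rule ccontr)
    assume "\<not> integrable M (\<lambda>y. f y * cnj (f y))"
    then have "l2_inner M f f = 0" unfolding l2_inner_def by (rule not_integrable_integral_eq)
    with i show False by simp
  qed
  then have "integrable M (\<lambda>y. complex_of_real ((cmod (f y))^2))"
    by (simp only: complex_norm_square)
  then have "integrable M (\<lambda>y. Re (complex_of_real ((cmod (f y))^2)))"
    by (rule integrable_bounded_linear[OF bounded_linear_Re])
  then show ?thesis using m by (simp add: L2_def)
qed

lemma leb_approx:
  fixes M :: "'b measure" and S :: "'b \<Rightarrow> 'b" and h :: "'b \<Rightarrow> complex"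
  assumes sp: "space M = UNIV" and Sm: "S \<in> measurable M M" and b: "bij S"
    and Im: "inv_into UNIV S \<in> measurable M M"
    and leb: "lebesgue_spectrum M S" and hL: "L2_0 M h" and e: "0 < e"
  shows "\<exists>u K. u \<in> borel_measurable M \<and>
        integrable M (\<lambda>y. (cmod (h y - u y))^2) \<and> (\<integral>y. (cmod (h y - u y))^2 \<partial>M) < e \<and>
        (\<forall>B. finite B \<longrightarrow> integrable M (\<lambda>y. (cmod (\<Sum>m\<in>B. u ((S^^m) y)))^2) \<and>
             (\<integral>y. (cmod (\<Sum>m\<in>B. u ((S^^m) y)))^2 \<partial>M) \<le> K * real (card B))"
proof -
  from leb[unfolded lebesgue_spectrum_def] obtain F :: "('b \<Rightarrow> complex) set" where H:
    "(\<forall>f\<in>F. L2_0 M f) \<and>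
        (\<forall>f\<in>F. \<forall>g\<in>F. \<forall>n m::int.
            l2_inner M (f \<circ> ipow M S n) (g \<circ> ipow M S m) = (if f = g \<and> n = m then 1 else 0)) \<and>
        (\<forall>g. L2_0 M g \<longrightarrow> (\<forall>e>0. \<exists>P c. finite P \<and> P \<subseteq> F \<times> UNIV \<and>
            l2_dist M g (\<lambda>y. \<Sum>(f, n)\<in>P. c (f, n) * f (ipow M S n y)) < e))" ..
  have FL: "\<And>f. f \<in> F \<Longrightarrow> L2_0 M f" using H by simp
  have on: "\<And>f g n m. f \<in> F \<Longrightarrow> g \<in> F \<Longrightarrow>
            l2_inner M (f \<circ> ipow M S n) (g \<circ> ipow M S m) = (if f = g \<and> n = m then 1 else 0)"
    using H by simp
  have "sqrt e > 0" using e by simp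
  then have "\<exists>P c. finite P \<and> P \<subseteq> F \<times> UNIV \<and>
            l2_dist M h (\<lambda>y. \<Sum>(f, n)\<in>P. c (f, n) * f (ipow M S n y)) < sqrt e"
    using H hL by simp
  then obtain Pp c where Pf: "finite Pp" and Psub: "Pp \<subseteq> F \<times> UNIV"
    and dist: "l2_dist M h (\<lambda>y. \<Sum>(f, n)\<in>Pp. c (f, n) * f (ipow M S n y)) < sqrt e"
    by (elim exE conjE)
  define \<phi> where "\<phi> f n y = f (ipow M S n y)" for f :: "'b \<Rightarrow> complex" and n y
  have phiL: "L2 M (\<phi> f n)" if f: "f \<in> F" for f n
  proof (rule L2_from_inner)
    have "f \<in> borel_measurable M" using FL[OF f] by (simp add: L2_0_def L2_def)
    then show "\<phi> f n \<in> borel_measurable M"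
      unfolding \<phi>_def by (rule measurable_compose[OF ipow_meas[OF sp Sm Im]])
    have "l2_inner M (f \<circ> ipow M S n) (f \<circ> ipow M S n) = 1" using on[OF f f] by simp
    moreover have "\<phi> f n = f \<circ> ipow M S n" unfolding \<phi>_def by (simp add: fun_eq_iff)
    ultimately show "l2_inner M (\<phi> f n) (\<phi> f n) = 1" by simp
  qed
  define u where "u y = (\<Sum>p\<in>Pp. c p * \<phi> (fst p) (snd p) y)" for y
  have ueq: "(\<lambda>y. \<Sum>(f, n)\<in>Pp. c (f, n) * f (ipow M S n y)) = u"
    unfolding u_def \<phi>_def by (simp add: split_beta)
  have PF: "fst p \<in> F" if "p \<in> Pp" for p using Psub that by auto
  have uL: "L2 M u"
    unfolding u_def by (intro L2_sum Pf L2_mult phiL PF)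
  then have um: "u \<in> borel_measurable M" by (simp add: L2_def)
  have hL2: "L2 M h" using hL by (simp add: L2_0_def)
  have ruL: "L2 M (\<lambda>y. h y - u y)" by (rule L2_diff[OF hL2 uL])
  then have ri: "integrable M (\<lambda>y. (cmod (h y - u y))^2)" by (simp add: L2_def)
  have rs: "(\<integral>y. (cmod (h y - u y))^2 \<partial>M) < e"
    using dist unfolding ueq l2_dist_def by (simp add: real_sqrt_less_iff)
  define K where "K = real (card Pp) * (\<Sum>p\<in>Pp. (cmod (c p))^2)"
  have var: "integrable M (\<lambda>y. (cmod (\<Sum>m\<in>B. u ((S^^m) y)))^2) \<and>
             (\<integral>y. (cmod (\<Sum>m\<in>B. u ((S^^m) y)))^2 \<partial>M) \<le> K * real (card B)" if B: "finite B" for B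
  proof -
    define \<psi> where "\<psi> p y = (\<Sum>m\<in>B. \<phi> (fst p) (snd p + int m) y)" for p y
    have eq: "(\<Sum>m\<in>B. u ((S^^m) y)) = (\<Sum>p\<in>Pp. c p * \<psi> p y)" for y
    proof -
      have "(\<Sum>m\<in>B. u ((S^^m) y)) = (\<Sum>m\<in>B. \<Sum>p\<in>Pp. c p * \<phi> (fst p) (snd p + int m) y)"
        unfolding u_def \<phi>_def by (simp add: ipow_funpow[OF sp b])
      also have "\<dots> = (\<Sum>p\<in>Pp. \<Sum>m\<in>B. c p * \<phi> (fst p) (snd p + int m) y)"
        by (rule sum.swap)
      also have "\<dots> = (\<Sum>p\<in>Pp. c p * \<psi> p y)"
        unfolding \<psi>_def by (simp add: sum_distrib_left)
      finally show ?thesis .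
    qed
    have psiL: "L2 M (\<psi> p)" if p: "p \<in> Pp" for p
      unfolding \<psi>_def by (intro L2_sum B phiL PF p)
    have psin: "(\<integral>y. (cmod (\<psi> p y))^2 \<partial>M) = real (card B)" if p: "p \<in> Pp" for p
      unfolding \<psi>_def
    proof (rule orthonormal_sum_norm[OF B])
      show "L2 M (\<phi> (fst p) (snd p + int i))" if "i \<in> B" for i by (rule phiL[OF PF[OF p]])
      show "l2_inner M (\<phi> (fst p) (snd p + int i)) (\<phi> (fst p) (snd p + int j)) = (if i = j then 1 else 0)"
        if "i \<in> B" "j \<in> B" for i j
      proof -
        have "\<phi> f n = f \<circ> ipow M S n" for f n unfolding \<phi>_def by (simp add: fun_eq_iff)
        then show ?thesis using on[OF PF[OF p] PF[OF p]] by simp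
      qed
    qed
    have LL: "L2 M (\<lambda>y. \<Sum>p\<in>Pp. c p * \<psi> p y)"
      by (intro L2_sum Pf L2_mult psiL)
    then have Li: "integrable M (\<lambda>y. (cmod (\<Sum>m\<in>B. u ((S^^m) y)))^2)"
      unfolding eq by (simp add: L2_def)
    have pw: "(cmod (\<Sum>m\<in>B. u ((S^^m) y)))^2 \<le> real (card Pp) * (\<Sum>p\<in>Pp. (cmod (c p))^2 * (cmod (\<psi> p y))^2)" for y
      unfolding eq using csum_sq[of "\<lambda>p. c p * \<psi> p y" Pp] by (simp add: norm_mult power_mult_distrib)
    have Ri: "integrable M (\<lambda>y. real (card Pp) * (\<Sum>p\<in>Pp. (cmod (c p))^2 * (cmod (\<psi> p y))^2))"
      using psiL by (auto simp: L2_def)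
    have "(\<integral>y. (cmod (\<Sum>m\<in>B. u ((S^^m) y)))^2 \<partial>M) \<le> (\<integral>y. real (card Pp) * (\<Sum>p\<in>Pp. (cmod (c p))^2 * (cmod (\<psi> p y))^2) \<partial>M)"
      by (rule integral_mono[OF Li Ri pw])
    also have "\<dots> = real (card Pp) * (\<Sum>p\<in>Pp. (cmod (c p))^2 * (\<integral>y. (cmod (\<psi> p y))^2 \<partial>M))"
      using psiL by (subst integral_mult_right_zero, subst Bochner_Integration.integral_sum) (auto simp: L2_def)
    also have "\<dots> = K * real (card B)"
      unfolding K_def using psin by (simp add: sum_distrib_right)
    finally show ?thesis using Li by simp
  qed
  show ?thesis using um ri rs var by blast
qed


lemma card_return_sum:
  fixes T :: "'a \<Rightarrow> 'a"
  shows "real (card (return_set T x V \<inter> A \<inter> {1..N})) = (\<Sum>n\<in>A \<inter> {1..N}. indicator V ((T^^n) x))"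
proof -
  have fin: "finite (A \<inter> {1..N})" by simp
  have "(\<Sum>n\<in>A \<inter> {1..N}. indicator V ((T^^n) x)) = (\<Sum>n\<in>A \<inter> {1..N}. (1::real) * indicator V ((T^^n) x))"
    by simp
  also have "\<dots> = (\<Sum>n\<in>{n\<in>A \<inter> {1..N}. (T^^n) x \<in> V}. (1::real))"
    by (rule Bochner_Integration.sum_mult_indicator[OF fin])
  also have "\<dots> = real (card {n\<in>A \<inter> {1..N}. (T^^n) x \<in> V})" by simp
  also have "{n\<in>A \<inter> {1..N}. (T^^n) x \<in> V} = return_set T x V \<inter> A \<inter> {1..N}"
    unfolding return_set_def by auto
  finally show ?thesis by simp
qed

lemma ld_measurable:
  fixes T :: "'a \<Rightarrow> 'a"
  assumes Tm: "T \<in> measurable M M" and V: "V \<in> sets M"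
  shows "{x\<in>space M. 0 < lower_density (return_set T x V \<inter> A)} \<in> sets M"
proof -
  have Tn[measurable]: "(T^^n) \<in> measurable M M" for n by (rule measurable_funpow[OF Tm])
  have eq: "lower_density (return_set T x V \<inter> A) =
      liminf (\<lambda>N. ereal ((\<Sum>n\<in>A \<inter> {1..N}. indicator V ((T^^n) x)) / real N))" for x
    unfolding lower_density_def card_return_sum ..
  have "(\<lambda>x. liminf (\<lambda>N. ereal ((\<Sum>n\<in>A \<inter> {1..N}. indicator V ((T^^n) x)) / real N))) \<in> borel_measurable M"
    using V by measurable
  then have gm[measurable]: "(\<lambda>x. lower_density (return_set T x V \<inter> A)) \<in> borel_measurable M"
    unfolding eq .
  show ?thesis by measurable
qed

lemma AE_exists:
  assumes "prob_space M" "AE x in M. P x"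
  shows "\<exists>x. P x"
proof (rule ccontr)
  assume "\<not> (\<exists>x. P x)"
  then have "AE x in M. False" using assms(2) by (auto elim: eventually_mono)
  then show False using prob_space.AE_False[OF assms(1)] by simp
qed


lemma per_V:
  fixes T :: "'a::{polish_space, real_vector} \<Rightarrow> 'a"
    and \<mu> :: "'a measure"
    and \<nu> :: "'b::polish_space measure"
    and S :: "'b \<Rightarrow> 'b"
  assumes mu_borel: "sets \<mu> = sets borel"
    and mu_inv: "mp_system \<mu> T"
    and mu_full: "\<And>U. open U \<Longrightarrow> U \<noteq> {} \<Longrightarrow> emeasure \<mu> U > 0"
    and nu_borel: "sets \<nu> = sets borel"
    and S_inv: "invertible_system \<nu> S"
    and factor: "is_factor \<mu> T \<nu> S"
    and leb: "lebesgue_spectrum \<nu> S"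
    and V: "open V" "V \<noteq> {}" and A: "0 < lower_density A"
  shows "AE x in \<mu>. 0 < lower_density (return_set T x V \<inter> A)"
proof -
  have Pnu: "prob_space \<nu>" and Sm: "S \<in> measurable \<nu> \<nu>" and dS: "distr \<nu> \<nu> S = \<nu>"
    and bS: "bij_betw S (space \<nu>) (space \<nu>)" and Im: "inv_into (space \<nu>) S \<in> measurable \<nu> \<nu>"
    using S_inv unfolding invertible_system_def mp_system_def by auto
  have Pmu: "prob_space \<mu>" and Tm: "T \<in> measurable \<mu> \<mu>"
    using mu_inv unfolding mp_system_def by auto
  interpret nu: prob_space \<nu> by (rule Pnu)
  interpret mu: prob_space \<mu> by (rule Pmu)
  have spn: "space \<nu> = UNIV" using sets_eq_imp_space_eq[OF nu_borel] by simp
  have spm: "space \<mu> = UNIV" using sets_eq_imp_space_eq[OF mu_borel] by simp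
  have b: "bij S" using bS spn by simp
  have Im': "inv_into UNIV S \<in> measurable \<nu> \<nu>" using Im spn by simp
  obtain \<pi> where pim: "\<pi> \<in> measurable \<nu> \<mu>" and comm: "AE y in \<nu>. \<pi> (S y) = T (\<pi> y)"
    and dpi: "distr \<nu> \<mu> \<pi> = \<mu>"
    using factor unfolding is_factor_def by blast
  have Vs: "V \<in> sets \<mu>" using V(1) mu_borel by simp
  define W where "W = \<pi> -` V \<inter> space \<nu>"
  have Ws: "W \<in> sets \<nu>" unfolding W_def by (rule measurable_sets[OF pim Vs])
  have mW: "measure \<nu> W = measure \<mu> V"
    using measure_distr[OF pim Vs] dpi unfolding W_def by simp
  have "0 < emeasure \<mu> V" by (rule mu_full[OF V])
  then have mV: "0 < measure \<mu> V" by (simp add: mu.emeasure_eq_measure)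
  have cW: "0 < measure \<nu> W" using mV mW by simp
  define h where "h y = complex_of_real (indicator W y - measure \<nu> W)" for y
  have hm: "h \<in> borel_measurable \<nu>" unfolding h_def using Ws by measurable
  have hb: "cmod (h y) \<le> 2" for y
  proof -
    have m0: "0 \<le> measure \<nu> W" and m1: "measure \<nu> W \<le> 1" by auto
    have "\<bar>indicator W y - measure \<nu> W\<bar> \<le> (2::real)"
    proof -
      have i0: "0 \<le> (indicator W y :: real)" "(indicator W y :: real) \<le> 1" by (auto simp: indicator_def)
      show ?thesis using m0 m1 i0 by arith
    qed
    then show ?thesis unfolding h_def norm_of_real .
  qed
  have hL0: "L2_0 \<nu> h"
  proof -
    have "integrable \<nu> (\<lambda>y. (cmod (h y))^2)"
    proof (rule nu.integrable_const_bound[where B=4])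
      show "AE y in \<nu>. norm ((cmod (h y))^2) \<le> 4"
      proof (rule AE_I2)
        fix y
        have "(cmod (h y))^2 \<le> 2^2" using hb[of y] by (intro power_mono) auto
        then show "norm ((cmod (h y))^2) \<le> 4" by simp
      qed
      show "(\<lambda>y. (cmod (h y))^2) \<in> borel_measurable \<nu>" using hm by measurable
    qed
    moreover have "(\<integral>y. h y \<partial>\<nu>) = 0"
    proof -
      have "(\<integral>y. h y \<partial>\<nu>) = complex_of_real (\<integral>y. indicator W y - measure \<nu> W \<partial>\<nu>)"
        unfolding h_def by (rule integral_complex_of_real)
      also have "(\<integral>y. indicator W y - measure \<nu> W \<partial>\<nu>) = 0"
      proof -
        have i1: "integrable \<nu> (\<lambda>y. indicator W y :: real)"
          using integrable_real_mult_indicator[OF Ws nu.integrable_const[of 1]] by simp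
        have i2: "integrable \<nu> (\<lambda>y. measure \<nu> W)" by simp
        have "(\<integral>y. indicator W y - measure \<nu> W \<partial>\<nu>) = (\<integral>y. indicator W y \<partial>\<nu>) - (\<integral>y. measure \<nu> W \<partial>\<nu>)"
          by (rule Bochner_Integration.integral_diff[OF i1 i2])
        then show ?thesis using Ws nu.prob_space by simp
      qed
      finally show ?thesis by simp
    qed
    ultimately show ?thesis using hm by (simp add: L2_0_def L2_def)
  qed
  have mainY: "AE y in \<nu>. 0 < lower_density ({n. (S^^n) y \<in> W} \<inter> A)"
  proof (rule main_Y[OF Pnu Sm dS Ws cW A])
    show "\<And>y. h y = complex_of_real (indicator W y - measure \<nu> W)" by (simp add: h_def)
    show "\<And>e. 0 < e \<Longrightarrow> \<exists>u K. u \<in> borel_measurable \<nu> \<and>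
        integrable \<nu> (\<lambda>y. (cmod (h y - u y))^2) \<and> (\<integral>y. (cmod (h y - u y))^2 \<partial>\<nu>) < e \<and>
        (\<forall>B. finite B \<longrightarrow> integrable \<nu> (\<lambda>y. (cmod (\<Sum>m\<in>B. u ((S^^m) y)))^2) \<and>
             (\<integral>y. (cmod (\<Sum>m\<in>B. u ((S^^m) y)))^2 \<partial>\<nu>) \<le> K * real (card B))"
      by (rule leb_approx[OF spn Sm b Im' leb hL0])
  qed
  obtain N0 where N0: "{y \<in> space \<nu>. \<not> \<pi> (S y) = T (\<pi> y)} \<subseteq> N0" "emeasure \<nu> N0 = 0" "N0 \<in> sets \<nu>"
    using comm by (rule AE_E)
  have "AE y in \<nu>. (S^^n) y \<notin> N0" for n
  proof (rule AE_I')
    have Snm: "(S^^n) \<in> measurable \<nu> \<nu>" by (rule measurable_funpow[OF Sm])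
    have "emeasure \<nu> ((S^^n) -` N0 \<inter> space \<nu>) = emeasure (distr \<nu> \<nu> (S^^n)) N0"
      by (rule emeasure_distr[OF Snm N0(3), symmetric])
    also have "\<dots> = 0" using distr_funpow[OF Sm dS] N0(2) by simp
    finally show "(S^^n) -` N0 \<inter> space \<nu> \<in> null_sets \<nu>"
      using measurable_sets[OF Snm N0(3)] by auto
    show "{y \<in> space \<nu>. \<not> (S^^n) y \<notin> N0} \<subseteq> (S^^n) -` N0 \<inter> space \<nu>" by auto
  qed
  then have "AE y in \<nu>. \<forall>n. (S^^n) y \<notin> N0" by (simp add: AE_all_countable)
  then have "AE y in \<nu>. 0 < lower_density (return_set T (\<pi> y) V \<inter> A)"
    using mainY
  proof (eventually_elim)
    case (elim y)
    have it: "\<pi> ((S^^n) y) = (T^^n) (\<pi> y)" for n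
    proof (induction n)
      case 0 then show ?case by simp
    next
      case (Suc n)
      have "(S^^n) y \<notin> N0" using elim(1) by blast
      then have "\<pi> (S ((S^^n) y)) = T (\<pi> ((S^^n) y))" using N0(1) spn by blast
      then show ?case using Suc by simp
    qed
    have "{n. (S^^n) y \<in> W} = return_set T (\<pi> y) V"
      unfolding W_def return_set_def using it spn by auto
    then show ?case using elim(2) by simp
  qed
  then have "AE x in distr \<nu> \<mu> \<pi>. 0 < lower_density (return_set T x V \<inter> A)"
    by (subst AE_distr_iff[OF pim]) (use ld_measurable[OF Tm Vs] in auto)
  then show ?thesis unfolding dpi .
qed


theorem corollary3p3:
  fixes T :: "'a::{polish_space, real_vector} \<Rightarrow> 'a"
    and \<mu> :: "'a measure"
    and \<nu> :: "'b::polish_space measure"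
    and S :: "'b \<Rightarrow> 'b"
  assumes X_tvs: "polish_tvs TYPE('a)"
    and X_inf: "infinite_dimensional TYPE('a)"
    and T_lin: "linear T" and T_cont: "continuous_on UNIV T"
    and mu_borel: "sets \<mu> = sets borel"
    and mu_inv: "mp_system \<mu> T"
    and mu_full: "\<And>U. open U \<Longrightarrow> U \<noteq> {} \<Longrightarrow> emeasure \<mu> U > 0"
    and nu_borel: "sets \<nu> = sets borel"
    and S_inv: "invertible_system \<nu> S"
    and factor: "is_factor \<mu> T \<nu> S"
    and leb: "lebesgue_spectrum \<nu> S"
  shows "hereditarily_frequently_hypercyclic T \<and>
    (\<forall>(I::nat set) (A::nat \<Rightarrow> nat set) (V::nat \<Rightarrow> 'a set).
        (\<forall>i\<in>I. open (V i) \<and> V i \<noteq> {} \<and> lower_density (A i) > 0) \<longrightarrow>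
        (AE x in \<mu>. \<forall>i\<in>I. lower_density (return_set T x (V i) \<inter> A i) > 0))"
proof -
  have second: "\<forall>(I::nat set) (A::nat \<Rightarrow> nat set) (V::nat \<Rightarrow> 'a set).
        (\<forall>i\<in>I. open (V i) \<and> V i \<noteq> {} \<and> lower_density (A i) > 0) \<longrightarrow>
        (AE x in \<mu>. \<forall>i\<in>I. lower_density (return_set T x (V i) \<inter> A i) > 0)"
  proof (intro allI impI)
    fix I :: "nat set" and A :: "nat \<Rightarrow> nat set" and V :: "nat \<Rightarrow> 'a set"
    assume H: "\<forall>i\<in>I. open (V i) \<and> V i \<noteq> {} \<and> lower_density (A i) > 0"
    have each: "AE x in \<mu>. 0 < lower_density (return_set T x (V i) \<inter> A i)" if i: "i \<in> I" for i
    proof -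
      have Hi: "open (V i)" "V i \<noteq> {}" "0 < lower_density (A i)" using H i by auto
      show ?thesis
      proof (rule per_V[OF mu_borel mu_inv _ nu_borel S_inv factor leb])
        show "\<And>U. open U \<Longrightarrow> U \<noteq> {} \<Longrightarrow> emeasure \<mu> U > 0" by (rule mu_full)
      qed (use Hi in auto)
    qed
    have "countable I" by (rule countableI_type)
    then show "AE x in \<mu>. \<forall>i\<in>I. lower_density (return_set T x (V i) \<inter> A i) > 0"
      using each by (simp add: AE_ball_countable)
  qed
  have Pmu: "prob_space \<mu>" using mu_inv by (simp add: mp_system_def)
  have first: "hereditarily_frequently_hypercyclic T"
    unfolding hereditarily_frequently_hypercyclic_def
  proof (intro allI impI)
    fix I :: "nat set" and A :: "nat \<Rightarrow> nat set" and V :: "nat \<Rightarrow> 'a set"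
    assume H: "\<forall>i\<in>I. open (V i) \<and> V i \<noteq> {} \<and> lower_density (A i) > 0"
    have "AE x in \<mu>. \<forall>i\<in>I. lower_density (return_set T x (V i) \<inter> A i) > 0"
      using second H by blast
    then show "\<exists>x. \<forall>i\<in>I. lower_density (return_set T x (V i) \<inter> A i) > 0"
      by (rule AE_exists[OF Pmu])
  qed
  show ?thesis using first second by blast
qed

end
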